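(* Let $R$ be a ring. Then $R$ is a CSNC ring if and only if for every clean element $a\in R$ one has $a-a^2\in \mathrm{Nil}(R)$.
   Context: All rings are associative with identity $1$. For a ring $R$, $\mathrm{Id}(R)$, $U(R)$, $\mathrm{Nil}(R)$ denote the sets of idempotents, units and nilpotent elements. An element $a\in R$ is clean if $a=e+u$ for some $e\in\mathrm{Id}(R)$, $u\in U(R)$. An element $a$ is nil-clean if $a=e+q$ with $e\in \mathrm{Id}(R)$, $q\in\mathrm{Nil}(R)$, and strongly nil-clean if moreover $eq=qe$. A ring $R$ is called CSNC if every clean element of $R$ is strongly nil-clean. *)

theory Defs
  imports Main
begin

definition idem :: "'a::ring_1 \<Rightarrow> bool" where
  "idem e \<longleftrightarrow> e * e = e"

definition unit_elem :: "'a::ring_1 \<Rightarrow> bool" where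
  "unit_elem u \<longleftrightarrow> (\<exists>v. u * v = 1 \<and> v * u = 1)"

definition nilpotent :: "'a::ring_1 \<Rightarrow> bool" where
  "nilpotent q \<longleftrightarrow> (\<exists>n::nat. q ^ n = 0)"

definition clean :: "'a::ring_1 \<Rightarrow> bool" where
  "clean a \<longleftrightarrow> (\<exists>e u. idem e \<and> unit_elem u \<and> a = e + u)"

definition strongly_nil_clean :: "'a::ring_1 \<Rightarrow> bool" where
  "strongly_nil_clean a \<longleftrightarrow> (\<exists>e q. idem e \<and> nilpotent q \<and> e * q = q * e \<and> a = e + q)"

definition CSNC :: "'a::ring_1 itself \<Rightarrow> bool" where
  "CSNC _ \<longleftrightarrow> (\<forall>a::'a. clean a \<longrightarrow> strongly_nil_clean a)"

end

theory Submission
  imports Defs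
begin

lemma num_comm: "(x::'a::ring_1) * numeral n = numeral n * x"
  by (metis mult_of_nat_commute of_nat_numeral)
lemma num_lcomm: "(x::'a::ring_1) * (numeral n * y) = numeral n * (x * y)"
  by (metis mult.assoc num_comm)

lemma newton_id: "let N = e - e*e; d = e+e-(1::'a::ring_1); f = e + N*d in f - f*f = N*N*(4 - d*d)"
  apply (simp add: Let_def algebra_simps num_comm num_lcomm)
  apply (simp only: numeral_Bit0 numeral_One distrib_right mult_1_left)
  apply (simp only: ac_simps)
  done

lemma comm_power_mult:
  fixes x y :: "'a::ring_1"
  assumes "x*y = y*x" shows "(x*y)^n = x^n * y^n"
proof (induction n)
  case 0 then show ?case by simp
next
  case (Suc n)
  have c: "y * x^n = x^n * y" using power_commuting_commutes[OF assms] by simp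
  have "(x*y)^Suc n = x*(y*x^n)*y^n" using Suc by (simp add: mult.assoc)
  also have "\<dots> = x^Suc n * y^Suc n" by (simp add: c mult.assoc)
  finally show ?case .
qed

lemma nil_comm_mult:
  fixes x y :: "'a::ring_1"
  assumes "x*y = y*x" "nilpotent x" shows "nilpotent (x*y)"
proof -
  from assms(2) obtain n where "x^n = 0" unfolding nilpotent_def by blast
  then have "(x*y)^n = 0" using comm_power_mult[OF assms(1)] by simp
  then show ?thesis unfolding nilpotent_def by blast
qed

definition bc :: "'a::ring_1 \<Rightarrow> 'a set" where
  "bc a = {x. \<forall>y. y*a = a*y \<longrightarrow> x*y = y*x}"

lemma bc_I: "(\<And>y. y*a = a*y \<Longrightarrow> x*y = y*x) \<Longrightarrow> x \<in> bc a"
  unfolding bc_def by blast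
lemma bc_D: "x \<in> bc a \<Longrightarrow> y*a = a*y \<Longrightarrow> x*y = y*x"
  unfolding bc_def by blast

lemma bc_comm: "x \<in> bc a \<Longrightarrow> z \<in> bc a \<Longrightarrow> x*z = z*x"
proof -
  assume x: "x \<in> bc a" and z: "z \<in> bc a"
  have "z*a = a*z" using bc_D[OF z, of a] by simp
  then show ?thesis using bc_D[OF x, of z] by simp
qed

lemma bc_self: "a \<in> bc a" by (rule bc_I) (erule sym)
lemma bc_one: "1 \<in> bc a" by (rule bc_I) simp
lemma bc_zero: "0 \<in> bc a" by (rule bc_I) simp
lemma bc_add: "x \<in> bc a \<Longrightarrow> z \<in> bc a \<Longrightarrow> x + z \<in> bc a"
proof (rule bc_I)
  fix y assume x: "x \<in> bc a" and z: "z \<in> bc a" and y: "y*a = a*y"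
  show "(x+z)*y = y*(x+z)" using bc_D[OF x y] bc_D[OF z y] by (simp add: distrib_left distrib_right)
qed
lemma bc_diff: "x \<in> bc a \<Longrightarrow> z \<in> bc a \<Longrightarrow> x - z \<in> bc a"
proof (rule bc_I)
  fix y assume x: "x \<in> bc a" and z: "z \<in> bc a" and y: "y*a = a*y"
  show "(x-z)*y = y*(x-z)" using bc_D[OF x y] bc_D[OF z y] by (simp add: left_diff_distrib right_diff_distrib)
qed
lemma bc_mult: "x \<in> bc a \<Longrightarrow> z \<in> bc a \<Longrightarrow> x * z \<in> bc a"
proof (rule bc_I)
  fix y assume x: "x \<in> bc a" and z: "z \<in> bc a" and y: "y*a = a*y"
  have "(x*z)*y = x*(z*y)" by (rule mult.assoc)
  also have "\<dots> = x*(y*z)" using bc_D[OF z y] by simp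
  also have "\<dots> = (x*y)*z" by (rule mult.assoc[symmetric])
  also have "\<dots> = (y*x)*z" using bc_D[OF x y] by simp
  also have "\<dots> = y*(x*z)" by (rule mult.assoc)
  finally show "(x*z)*y = y*(x*z)" .
qed
lemma bc_num: "numeral n \<in> bc a"
  by (rule bc_I) (rule num_comm[symmetric])
lemma bc_pow: "x \<in> bc a \<Longrightarrow> x ^ n \<in> bc a"
  by (induction n) (simp_all add: bc_one bc_mult)

fun newt :: "'a::ring_1 \<Rightarrow> nat \<Rightarrow> 'a" where
  "newt a 0 = a"
| "newt a (Suc k) = newt a k + (newt a k - newt a k * newt a k) * (newt a k + newt a k - 1)"

lemma newt_bc: "newt a k \<in> bc a"
  by (induction k) (simp_all add: bc_self bc_add bc_diff bc_mult bc_one)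

lemma newt_main:
  fixes a :: "'a::ring_1"
  defines "b \<equiv> a - a*a"
  shows "\<exists>z\<in>bc a. newt a k - newt a k * newt a k = b^(2^k) * z \<and> (\<exists>w\<in>bc a. a - newt a k = b*w)"
proof (induction k)
  case 0
  have "newt a 0 - newt a 0 * newt a 0 = b^(2^0) * 1" by (simp add: b_def)
  moreover have "a - newt a 0 = b * 0" by simp
  ultimately show ?case using bc_one bc_zero by blast
next
  case (Suc k)
  from Suc obtain z w where z: "z \<in> bc a" and w: "w \<in> bc a"
    and hz: "newt a k - newt a k * newt a k = b^(2^k) * z" and hw: "a - newt a k = b*w" by blast
  define e where "e = newt a k"
  define P where "P = b^(2^k)"
  define d where "d = e + e - 1"
  define c where "c = 4 - d*d"
  have bb: "b \<in> bc a" unfolding b_def by (intro bc_diff bc_mult bc_self)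
  have Pb: "P \<in> bc a" unfolding P_def using bb by (rule bc_pow)
  have eb: "e \<in> bc a" unfolding e_def by (rule newt_bc)
  have db: "d \<in> bc a" unfolding d_def by (intro bc_add bc_diff bc_one eb)
  have cb: "c \<in> bc a" unfolding c_def by (intro bc_diff bc_mult bc_num db)
  have zP: "z*P = P*z" using bc_comm[OF z Pb] .
  have zP2: "z*(P*X) = P*(z*X)" for X by (metis zP mult.assoc)
  have N: "e - e*e = P*z" using hz unfolding e_def P_def .
  have f: "newt a (Suc k) = e + (e - e*e)*d" unfolding e_def d_def by simp
  have id: "newt a (Suc k) - newt a (Suc k) * newt a (Suc k) = (e - e*e)*(e - e*e)*c"
    using newton_id[of e] unfolding f c_def d_def Let_def by simp
  have pw: "b^(2^Suc k) = P*P" unfolding P_def by (simp add: power_add[symmetric] mult_2)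
  have 1: "newt a (Suc k) - newt a (Suc k) * newt a (Suc k) = b^(2^Suc k) * (z*z*c)"
    unfolding id N pw by (simp add: mult.assoc zP2)
  have "(2::nat)^k = Suc (2^k - 1)" by simp
  then have Pd: "P = b * b^(2^k - 1)" unfolding P_def by (metis power_Suc)
  have "a - newt a (Suc k) = (a - e) - (e - e*e)*d" unfolding f by (simp add: algebra_simps)
  also have "\<dots> = b*(w - b^(2^k - 1)*z*d)" using hw unfolding e_def[symmetric] N Pd
    by (simp add: algebra_simps)
  finally have 2: "a - newt a (Suc k) = b*(w - b^(2^k - 1)*z*d)" .
  have m: "w - b^(2^k - 1)*z*d \<in> bc a"
    by (intro bc_diff bc_mult bc_pow w z db bb)
  have zc: "z*z*c \<in> bc a" using z cb by (intro bc_mult)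
  show ?case using 1 2 m zc by blast
qed

lemma strong_of_nil:
  fixes a :: "'a::ring_1"
  assumes "nilpotent (a - a^2)"
  shows "strongly_nil_clean a"
proof -
  define b where "b = a - a*a"
  from assms obtain n where bn: "b^n = 0" unfolding nilpotent_def b_def power2_eq_square by blast
  have bb: "b \<in> bc a" unfolding b_def by (intro bc_diff bc_mult bc_self)
  have "n \<le> 2^n" using less_exp[of n] by (rule less_imp_le)
  then obtain m where m: "2^n = n + m" using le_Suc_ex by blast
  have "b^(2^n) = b^n * b^m" unfolding m by (rule power_add)
  then have b0: "b^(2^n) = 0" using bn by simp
  from newt_main[of a n] obtain z w where w: "w \<in> bc a"
    and hz: "newt a n - newt a n * newt a n = (a - a*a)^(2^n) * z" and hw: "a - newt a n = (a - a*a)*w"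
    by blast
  define e where "e = newt a n"
  define q where "q = a - e"
  have "e - e*e = 0" using hz b0 unfolding e_def b_def by simp
  then have ide: "idem e" unfolding idem_def by simp
  have qbw: "q = b*w" unfolding q_def e_def b_def by (rule hw)
  have "(b*w)^n = b^n * w^n" by (rule comm_power_mult[OF bc_comm[OF bb w]])
  then have "q^n = 0" using qbw bn by simp
  then have nq: "nilpotent q" unfolding nilpotent_def by blast
  have eb: "e \<in> bc a" unfolding e_def by (rule newt_bc)
  have qb: "q \<in> bc a" unfolding q_def by (intro bc_diff bc_self eb)
  have "e*q = q*e" using bc_comm[OF eb qb] .
  moreover have "a = e + q" unfolding q_def by simp
  ultimately show ?thesis using ide nq unfolding strongly_nil_clean_def by blast
qed

lemma nil_of_strong:
  fixes a :: "'a::ring_1"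
  assumes "strongly_nil_clean a"
  shows "nilpotent (a - a^2)"
proof -
  from assms obtain e q where e: "e*e = e" and nq: "nilpotent q" and eq: "e*q = q*e" and a: "a = e + q"
    unfolding strongly_nil_clean_def idem_def by blast
  have "a - a^2 = q*(1 - e - e - q)"
    unfolding a power2_eq_square by (simp add: algebra_simps e eq)
  moreover have "q*(1 - e - e - q) = (1 - e - e - q)*q" by (simp add: algebra_simps eq)
  ultimately show ?thesis using nil_comm_mult[OF _ nq, of "1 - e - e - q"] by simp
qed

theorem theorem2p1:
  shows "CSNC TYPE('a::ring_1) \<longleftrightarrow> (\<forall>a::'a. clean a \<longrightarrow> nilpotent (a - a ^ 2))"
  unfolding CSNC_def using strong_of_nil nil_of_strong by blast

end
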